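(* Let $(X,\mathrm{d})$ be a compact metric space, let $k\geq 1$ and let $\mathscr{F}=\{f_1,\dots,f_k\}$ be a finite family of homeomorphisms of $X$. Consider the symbolic one-step skew-product $\Phi=\tau\ltimes\mathscr{F}$ on $\Sigma_k\times X$. Suppose that $X$ is a strict attractor of $\mathscr{F}$. Then the strong unstable foliation $\mathcal{F}^{uu}(\Phi)$ is minimal, i.e. every leaf $W^{uu}(\omega,x)$, $(\omega,x)\in\Sigma_k\times X$, is dense in $\Sigma_k\times X$.
   Context: $\Sigma_k=\{1,\dots,k\}^{\mathbb{Z}}$ with the metric $\mathrm{d}_{\Sigma_k}(\omega,\omega')=\nu^m$, $m=\min\{i\geq 0:\omega_i\neq\omega'_i\text{ or }\omega_{-i}\neq\omega'_{-i}\}$, for a fixed $0<\nu<1$; $\tau$ is the shift $(\tau\omega)_i=\omega_{i+1}$. The skew-product is $\Phi(\omega,x)=(\tau(\omega),f_{\omega_0}(x))$. The local stable (resp. unstable) set $W^s_{loc}(\omega)$ (resp. $W^u_{loc}(\omega)$) is the set of $\omega'\in\Sigma_k$ with $\omega'_i=\omega_i$ for all $i\geq0$ (resp. for all $i<0$). Set $W^{ss}_{loc}(\omega,x)=W^s_{loc}(\omega)\times\{x\}$, $W^{uu}_{loc}(\omega,x)=W^u_{loc}(\omega)\times\{x\}$, $W^{ss}(\omega,x)=\bigcup_{n\geq0}\Phi^{-n}(W^{ss}_{loc}(\Phi^n(\omega,x)))$, $W^{uu}(\omega,x)=\bigcup_{n\geq0}\Phi^{n}(W^{uu}_{loc}(\Phi^{-n}(\omega,x)))$.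 $\mathcal{F}^{uu}(\Phi)=\{W^{uu}(\omega,x)\}$, $\mathcal{F}^{ss}(\Phi)=\{W^{ss}(\omega,x)\}$; a foliation is minimal if each leaf is dense. The Hutchinson operator of $\mathscr{F}$ is $F(A)=f_1(A)\cup\dots\cup f_k(A)$ on the hyperspace $\mathscr{K}(X)$ of nonempty compact subsets of $X$ with the Hausdorff metric $\mathrm{d_H}$. A set $K\in\mathscr{K}(X)$ is a strict attractor of $\mathscr{F}$ if there is an open $U\supset K$ such that $F^n(S)\to K$ in $\mathrm{d_H}$ for every nonempty compact $S\subset U$; for $K=X$ this means $F^n(S)\to X$ for every $S\in\mathscr{K}(X)$. *)

theory Defs
  imports "HOL-Analysis.Analysis"
begin

definition hausdist :: "'a::metric_space set \<Rightarrow> 'a set \<Rightarrow> real" where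
  "hausdist A B = max (SUP a\<in>A. infdist a B) (SUP b\<in>B. infdist b A)"

definition hutchinson :: "nat \<Rightarrow> (nat \<Rightarrow> 'a \<Rightarrow> 'a) \<Rightarrow> 'a set \<Rightarrow> 'a set" where
  "hutchinson k f A = (\<Union>i\<in>{1..k}. f i ` A)"

definition strict_attractor :: "'a::metric_space set \<Rightarrow> nat \<Rightarrow> (nat \<Rightarrow> 'a \<Rightarrow> 'a) \<Rightarrow> 'a set \<Rightarrow> bool" where
  "strict_attractor X k f K \<longleftrightarrow>
     K \<noteq> {} \<and> compact K \<and> K \<subseteq> X \<and>
     (\<exists>U. openin (top_of_set X) U \<and> K \<subseteq> U \<and>
        (\<forall>S. S \<noteq> {} \<and> compact S \<and> S \<subseteq> U \<longrightarrow>
             (\<lambda>n. hausdist ((hutchinson k f ^^ n) S) K) \<longlonglongrightarrow> 0))"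

definition Sigma_k :: "nat \<Rightarrow> (int \<Rightarrow> nat) set" where
  "Sigma_k k = {\<omega>. \<forall>i. \<omega> i \<in> {1..k}}"

definition dSigma :: "real \<Rightarrow> (int \<Rightarrow> nat) \<Rightarrow> (int \<Rightarrow> nat) \<Rightarrow> real" where
  "dSigma \<nu> \<omega> \<omega>' = (if \<omega> = \<omega>' then 0
      else \<nu> ^ (LEAST m::nat. \<omega> (int m) \<noteq> \<omega>' (int m) \<or> \<omega> (- int m) \<noteq> \<omega>' (- int m)))"

definition shift :: "(int \<Rightarrow> nat) \<Rightarrow> (int \<Rightarrow> nat)" where
  "shift \<omega> = (\<lambda>i. \<omega> (i + 1))"

definition skew :: "(nat \<Rightarrow> 'a \<Rightarrow> 'a) \<Rightarrow> (int \<Rightarrow> nat) \<times> 'a \<Rightarrow> (int \<Rightarrow> nat) \<times> 'a" where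
  "skew f p = (shift (fst p), f (fst p 0) (snd p))"

definition Wuu_loc :: "nat \<Rightarrow> (int \<Rightarrow> nat) \<times> 'a \<Rightarrow> ((int \<Rightarrow> nat) \<times> 'a) set" where
  "Wuu_loc k p = {\<omega>' \<in> Sigma_k k. \<forall>i<0. \<omega>' i = fst p i} \<times> {snd p}"

text \<open>Strong unstable leaf W^uu(p) = \<Union>_{n\<ge>0} \<Phi>^n(W^uu_loc(\<Phi>^{-n}(p))).
  Since \<Phi> is a bijection of Sigma_k \<times> X, \<Phi>^{-n}(p) is the unique z in Sigma_k \<times> X
  with \<Phi>^n(z) = p.\<close>
definition Wuu :: "nat \<Rightarrow> 'a set \<Rightarrow> (nat \<Rightarrow> 'a \<Rightarrow> 'a) \<Rightarrow> (int \<Rightarrow> nat) \<times> 'a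
                    \<Rightarrow> ((int \<Rightarrow> nat) \<times> 'a) set" where
  "Wuu k X f p = (\<Union>n. \<Union>z\<in>{z \<in> Sigma_k k \<times> X. (skew f ^^ n) z = p}.
                    (skew f ^^ n) ` Wuu_loc k z)"

definition dense_in_SX :: "real \<Rightarrow> nat \<Rightarrow> 'a::metric_space set \<Rightarrow> ((int \<Rightarrow> nat) \<times> 'a) set \<Rightarrow> bool" where
  "dense_in_SX \<nu> k X W \<longleftrightarrow>
     (\<forall>\<omega>\<in>Sigma_k k. \<forall>x\<in>X. \<forall>\<epsilon>>0. \<exists>(\<eta>, y)\<in>W. dSigma \<nu> \<eta> \<omega> < \<epsilon> \<and> dist y x < \<epsilon>)"

end

theory Submission
  imports Defs
begin


fun fwl :: "(nat \<Rightarrow> 'a \<Rightarrow> 'a) \<Rightarrow> nat list \<Rightarrow> 'a \<Rightarrow> 'a" where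
  "fwl f [] a = a"
| "fwl f (i#w) a = fwl f w (f i a)"

definition Wd :: "nat \<Rightarrow> nat \<Rightarrow> nat list set" where
  "Wd k n = {w. set w \<subseteq> {1..k} \<and> length w = n}"

lemma fwl_append: "fwl f (u @ v) a = fwl f v (fwl f u a)"
  by (induction u arbitrary: a) auto

lemma fwl_snoc: "fwl f (w @ [i]) a = f i (fwl f w a)"
  by (simp add: fwl_append)

lemma hut_iter:
  "(hutchinson k f ^^ n) S = {fwl f w s | w s. w \<in> Wd k n \<and> s \<in> S}"
proof (induction n)
  case 0
  then show ?case by (auto simp: Wd_def)
next
  case (Suc n)
  show ?case
  proof (rule set_eqI, rule iffI)
    fix y assume "y \<in> (hutchinson k f ^^ Suc n) S"
    then obtain i z where i: "i \<in> {1..k}" and z: "z \<in> (hutchinson k f ^^ n) S" and y: "y = f i z"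
      by (auto simp: hutchinson_def)
    from z Suc obtain w s where "w \<in> Wd k n" "s \<in> S" "z = fwl f w s" by auto
    then show "y \<in> {fwl f w s | w s. w \<in> Wd k (Suc n) \<and> s \<in> S}"
      using i y by (auto simp: Wd_def fwl_snoc intro!: exI[of _ "w @ [i]"])
  next
    fix y assume "y \<in> {fwl f w s | w s. w \<in> Wd k (Suc n) \<and> s \<in> S}"
    then obtain w s where w: "w \<in> Wd k (Suc n)" and s: "s \<in> S" and y: "y = fwl f w s" by auto
    have "w \<noteq> []" using w by (auto simp: Wd_def)
    define w' i where "w' = butlast w" and "i = last w"
    have ww: "w = w' @ [i]" using \<open>w \<noteq> []\<close> by (simp add: w'_def i_def)
    have "w' \<in> Wd k n" "i \<in> {1..k}" using w ww by (auto simp: Wd_def)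
    then have "fwl f w' s \<in> (hutchinson k f ^^ n) S" using Suc s by auto
    then show "y \<in> (hutchinson k f ^^ Suc n) S"
      using \<open>i \<in> {1..k}\<close> y ww by (auto simp: hutchinson_def fwl_snoc)
  qed
qed

lemma fwl_maps:
  assumes "\<forall>i\<in>{1..k}. f i ` X \<subseteq> X" "set w \<subseteq> {1..k}" "a \<in> X"
  shows "fwl f w a \<in> X"
  using assms by (induction w arbitrary: a) (auto simp: image_subset_iff)

lemma fwl_onto:
  assumes "\<forall>i\<in>{1..k}. f i ` X = X" "set w \<subseteq> {1..k}" "y \<in> X"
  shows "\<exists>a\<in>X. fwl f w a = y"
  using assms
proof (induction w arbitrary: y rule: rev_induct)
  case Nil then show ?case by auto
next
  case (snoc i w)
  then have "i \<in> {1..k}" by auto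
  with snoc.prems obtain z where "z \<in> X" "f i z = y" by (metis imageE)
  with snoc obtain a where "a \<in> X" "fwl f w a = z" by auto
  then show ?case using \<open>f i z = y\<close> by (auto simp: fwl_snoc)
qed

lemma fwl_cont:
  assumes "\<forall>i\<in>{1..k}. f i ` X \<subseteq> X \<and> continuous_on X (f i)" "set w \<subseteq> {1..k}"
  shows "continuous_on X (fwl f w)"
  using assms
proof (induction w)
  case Nil then show ?case by (simp add: continuous_on_id')
next
  case (Cons i w)
  then have c: "continuous_on X (fwl f w)" and i: "i \<in> {1..k}" by auto
  have "fwl f (i#w) = fwl f w \<circ> f i" by auto
  then show ?case
    using continuous_on_compose[of X "f i" "fwl f w"] c i Cons.prems
    by (metis continuous_on_subset)
qed

lemma skew_iter:
  "(skew f ^^ n) (\<zeta>, a) = (\<lambda>i. \<zeta> (i + int n), fwl f (map (\<lambda>j. \<zeta> (int j)) [0..<n]) a)"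
proof (induction n)
  case 0 then show ?case by simp
next
  case (Suc n)
  then show ?case
    apply (simp add: skew_def shift_def fwl_snoc)
    by (intro ext arg_cong[where f=\<zeta>]) linarith
qed



lemma approach:
  fixes X :: "'a::metric_space set"
  assumes "compact X" "k \<ge> 1" "\<forall>i\<in>{1..k}. f i ` X \<subseteq> X"
    and SA: "(\<lambda>n. hausdist ((hutchinson k f ^^ n) {a}) X) \<longlonglongrightarrow> 0"
    and "a \<in> X" "z \<in> X" "r > 0"
  shows "\<exists>P. \<forall>n\<ge>P. \<exists>w\<in>Wd k n. dist (fwl f w a) z < r"
proof -
  from SA \<open>r > 0\<close> obtain P where P: "\<forall>n\<ge>P. \<bar>hausdist ((hutchinson k f ^^ n) {a}) X\<bar> < r"
    unfolding LIMSEQ_def dist_real_def by (metis diff_zero)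
  show ?thesis
  proof (intro exI allI impI)
    fix n assume "P \<le> n"
    define H where "H = (hutchinson k f ^^ n) {a}"
    have H: "H = (\<lambda>w. fwl f w a) ` Wd k n" unfolding H_def hut_iter by auto
    have "replicate n 1 \<in> Wd k n" using \<open>k \<ge> 1\<close> by (auto simp: Wd_def)
    then have Hne: "H \<noteq> {}" using H by auto
    have HX: "H \<subseteq> X" using H fwl_maps[OF assms(3)] \<open>a \<in> X\<close> by (auto simp: Wd_def)
    have bX: "bounded X" using \<open>compact X\<close> compact_imp_bounded by auto
    have bdd: "bdd_above ((\<lambda>b. infdist b H) ` X)"
    proof (rule bdd_aboveI2)
      fix b assume "b \<in> X"
      obtain h where "h \<in> H" using Hne by auto
      then have "infdist b H \<le> dist b h" by (rule infdist_le)
      also have "\<dots> \<le> diameter X" using diameter_bounded_bound[OF bX \<open>b \<in> X\<close>] \<open>h \<in> H\<close> HX by auto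
      finally show "infdist b H \<le> diameter X" .
    qed
    have "infdist z H \<le> (SUP b\<in>X. infdist b H)" by (rule cSUP_upper[OF \<open>z \<in> X\<close> bdd])
    also have "\<dots> \<le> hausdist H X" unfolding hausdist_def by simp
    also have "\<dots> < r" using P \<open>P \<le> n\<close> H_def by auto
    finally have "infdist z H < r" .
    then have "\<exists>h\<in>H. dist z h < r"
    proof -
      have bb: "bdd_below ((\<lambda>h. dist z h) ` H)" by (rule bdd_belowI2[where m=0]) simp
      have "(INF h\<in>H. dist z h) < r" using \<open>infdist z H < r\<close> Hne unfolding infdist_def by simp
      then show ?thesis using cINF_less_iff[OF Hne bb] by blast
    qed
    then show "\<exists>w\<in>Wd k n. dist (fwl f w a) z < r" using H by (auto simp: dist_commute)
  qed
qed



lemma uniform: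
  fixes X :: "'a::metric_space set"
  assumes X: "compact X" and k: "k \<ge> 1" and fc: "\<forall>i\<in>{1..k}. f i ` X \<subseteq> X \<and> continuous_on X (f i)"
    and SA: "\<forall>a\<in>X. (\<lambda>n. hausdist ((hutchinson k f ^^ n) {a}) X) \<longlonglongrightarrow> 0"
    and b: "b \<in> X" and \<delta>: "\<delta> > 0"
  shows "\<exists>N. \<forall>a\<in>X. \<exists>w\<in>Wd k N. dist (fwl f w a) b < \<delta>"
proof -
  have fm: "\<forall>i\<in>{1..k}. f i ` X \<subseteq> X" using fc by auto
  define A where "A M = {a\<in>X. \<forall>n\<ge>M. \<exists>w\<in>Wd k n. dist (fwl f w a) b \<le> \<delta>/2}" for M
  have closedA: "closedin (top_of_set X) (A M)" for M
  proof -
    have eq: "A M = X \<inter> (\<Inter>n\<in>{M..}. \<Union>w\<in>Wd k n. fwl f w -` cball b (\<delta>/2) \<inter> X)"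
      by (auto simp: A_def dist_commute)
    have cl1: "closed (fwl f w -` cball b (\<delta>/2) \<inter> X)" if "w \<in> Wd k n" for w n
    proof -
      have "continuous_on X (fwl f w)" using fwl_cont[OF fc] that by (auto simp: Wd_def)
      then show ?thesis
        using continuous_on_closed_vimage[of X "fwl f w"] compact_imp_closed[OF X] by auto
    qed
    have fin: "finite (Wd k n)" for n unfolding Wd_def using finite_lists_length_eq[of "{1..k}" n] by simp
    have clU: "closed (\<Union>w\<in>Wd k n. fwl f w -` cball b (\<delta>/2) \<inter> X)" for n
      using cl1 fin by (intro closed_UN) auto
    have "closed (\<Inter>n\<in>{M..}. \<Union>w\<in>Wd k n. fwl f w -` cball b (\<delta>/2) \<inter> X)"
      by (intro closed_INT ballI clU)
    then show ?thesis unfolding eq by (rule closedin_closed_Int)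
  qed
  have cover: "\<Union>(range A) = X"
  proof
    show "\<Union>(range A) \<subseteq> X" by (auto simp: A_def)
    show "X \<subseteq> \<Union>(range A)"
    proof
      fix a assume "a \<in> X"
      obtain P where "\<forall>n\<ge>P. \<exists>w\<in>Wd k n. dist (fwl f w a) b < \<delta>/2"
        using approach[OF X k fm _ \<open>a \<in> X\<close> b, of "\<delta>/2"] SA \<open>a \<in> X\<close> \<delta> by auto
      then have "a \<in> A P" using \<open>a \<in> X\<close> unfolding A_def by (auto intro: less_imp_le)
      then show "a \<in> \<Union>(range A)" by auto
    qed
  qed
  have "\<exists>M. (top_of_set X) interior_of (A M) \<noteq> {}"
  proof (rule ccontr)
    assume "\<not> ?thesis"
    then have "(top_of_set X) interior_of \<Union>(range A) = {}"
    proof (intro Baire_category_alt conjI)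
      show "completely_metrizable_space (top_of_set X) \<or>
            locally_compact_space (top_of_set X) \<and> regular_space (top_of_set X)"
        using X by (auto intro!: compact_imp_locally_compact_space compact_space_subtopology
            regular_space_subtopology regular_space_euclidean)
    qed (use closedA in auto)
    moreover have "(top_of_set X) interior_of \<Union>(range A) = X"
      using cover interior_of_topspace[of "top_of_set X"] by simp
    ultimately show False using b by auto
  qed
  then obtain M w0 where w0: "w0 \<in> (top_of_set X) interior_of (A M)" by auto
  have "openin (top_of_set X) ((top_of_set X) interior_of (A M))" by simp
  then obtain r where r: "r > 0" "ball w0 r \<inter> X \<subseteq> (top_of_set X) interior_of (A M)"
    using w0 unfolding openin_contains_ball by blast
  have w0X: "w0 \<in> X" using w0 interior_of_subset_topspace by fastforce
  have ballA: "a' \<in> X \<Longrightarrow> dist a' w0 < r \<Longrightarrow> a' \<in> A M" for a'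
  proof -
    assume "a' \<in> X" "dist a' w0 < r"
    then have "a' \<in> ball w0 r \<inter> X" by (simp add: dist_commute)
    then show "a' \<in> A M" using r interior_of_subset[of "top_of_set X" "A M"] by blast
  qed
  have loc: "\<forall>a\<in>X. \<exists>P w \<rho>. w \<in> Wd k P \<and> \<rho> > 0 \<and> (\<forall>a'\<in>X. dist a' a < \<rho> \<longrightarrow> fwl f w a' \<in> A M)"
  proof
    fix a assume aX: "a \<in> X"
    obtain P where "\<forall>n\<ge>P. \<exists>w\<in>Wd k n. dist (fwl f w a) w0 < r"
      using approach[OF X k fm _ aX w0X r(1)] SA aX by auto
    then obtain w where w: "w \<in> Wd k P" "dist (fwl f w a) w0 < r" by auto
    have "continuous_on X (fwl f w)" using fwl_cont[OF fc] w by (auto simp: Wd_def)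
    then obtain \<rho> where \<rho>: "\<rho> > 0" "\<forall>a'\<in>X. dist a' a < \<rho> \<longrightarrow> dist (fwl f w a') (fwl f w a) < r - dist (fwl f w a) w0"
      using aX w(2) unfolding continuous_on_iff by (metis diff_gt_0_iff_gt)
    have "\<forall>a'\<in>X. dist a' a < \<rho> \<longrightarrow> fwl f w a' \<in> A M"
    proof (intro ballI impI)
      fix a' assume "a' \<in> X" "dist a' a < \<rho>"
      then have "dist (fwl f w a') (fwl f w a) < r - dist (fwl f w a) w0" using \<rho> by auto
      then have "dist (fwl f w a') w0 < r" using dist_triangle[of "fwl f w a'" w0 "fwl f w a"] by linarith
      moreover have "fwl f w a' \<in> X" using fwl_maps[OF fm] w \<open>a' \<in> X\<close> by (auto simp: Wd_def)
      ultimately show "fwl f w a' \<in> A M" using ballA by auto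
    qed
    then show "\<exists>P w \<rho>. w \<in> Wd k P \<and> \<rho> > 0 \<and> (\<forall>a'\<in>X. dist a' a < \<rho> \<longrightarrow> fwl f w a' \<in> A M)"
      using w \<rho> by blast
  qed
  then obtain P W R where PWR: "\<And>a. a \<in> X \<Longrightarrow> W a \<in> Wd k (P a) \<and> R a > 0 \<and> (\<forall>a'\<in>X. dist a' a < R a \<longrightarrow> fwl f (W a) a' \<in> A M)"
    by metis
  obtain K where K: "K \<subseteq> X" "finite K" "X \<subseteq> (\<Union>a\<in>K. ball a (R a))"
  proof (rule compactE_image[OF X, of X "\<lambda>a. ball a (R a)"])
    show "X \<subseteq> (\<Union>a\<in>X. ball a (R a))" using PWR by force
  qed auto
  define N where "N = sum P K + M"
  show ?thesis
  proof (intro exI ballI)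
    fix a' assume a'X: "a' \<in> X"
    then obtain a where a: "a \<in> K" "dist a a' < R a" using K by auto
    have aX: "a \<in> X" using a K by auto
    have "P a \<le> sum P K" using a K by (simp add: member_le_sum)
    then have PN: "P a + (N - P a) = N" "N - P a \<ge> M" unfolding N_def by auto
    have "fwl f (W a) a' \<in> A M" using PWR[OF aX] a'X a(2) by (auto simp: dist_commute)
    then obtain w' where w': "w' \<in> Wd k (N - P a)" "dist (fwl f w' (fwl f (W a) a')) b \<le> \<delta>/2"
      using PN(2) unfolding A_def by blast
    have "W a @ w' \<in> Wd k N" using w' PWR[OF aX] PN(1) by (auto simp: Wd_def)
    moreover have "dist (fwl f (W a @ w') a') b < \<delta>" using w'(2) \<delta> by (simp add: fwl_append)
    ultimately show "\<exists>w\<in>Wd k N. dist (fwl f w a') b < \<delta>" by blast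
  qed
qed



theorem theoremA:
  fixes X :: "'a::metric_space set" and k :: nat and f :: "nat \<Rightarrow> 'a \<Rightarrow> 'a" and \<nu> :: real
  assumes "compact X"
    and "k \<ge> 1"
    and "0 < \<nu>" and "\<nu> < 1"
    and "\<forall>i\<in>{1..k}. \<exists>g. homeomorphism X X (f i) g"
    and "strict_attractor X k f X"
  shows "\<forall>\<omega>\<in>Sigma_k k. \<forall>x\<in>X. dense_in_SX \<nu> k X (Wuu k X f (\<omega>, x))"
proof (intro ballI)
  fix \<omega> x assume \<omega>: "\<omega> \<in> Sigma_k k" and x: "x \<in> X"
  have fon: "\<forall>i\<in>{1..k}. f i ` X = X" and fct: "\<forall>i\<in>{1..k}. continuous_on X (f i)"
    using assms(5) unfolding homeomorphism_def by blast+
  have fc: "\<forall>i\<in>{1..k}. f i ` X \<subseteq> X \<and> continuous_on X (f i)"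
    using fon fct by auto
  have SA: "\<forall>a\<in>X. (\<lambda>n. hausdist ((hutchinson k f ^^ n) {a}) X) \<longlonglongrightarrow> 0"
  proof
    fix a assume "a \<in> X"
    obtain U where "X \<subseteq> U" "\<forall>S. S \<noteq> {} \<and> compact S \<and> S \<subseteq> U \<longrightarrow>
             (\<lambda>n. hausdist ((hutchinson k f ^^ n) S) X) \<longlonglongrightarrow> 0"
      using assms(6) unfolding strict_attractor_def by blast
    then show "(\<lambda>n. hausdist ((hutchinson k f ^^ n) {a}) X) \<longlonglongrightarrow> 0"
      using \<open>a \<in> X\<close> by auto
  qed
  show "dense_in_SX \<nu> k X (Wuu k X f (\<omega>, x))"
    unfolding dense_in_SX_def
  proof (intro ballI allI impI)
    fix \<omega>' y and \<epsilon> :: real assume \<omega>': "\<omega>' \<in> Sigma_k k" and y: "y \<in> X" and \<epsilon>: "0 < \<epsilon>"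
    obtain m where m: "\<nu> ^ m < \<epsilon>" using real_arch_pow_inv[OF \<epsilon> assms(4)] by auto
    define v where "v = map (\<lambda>j. \<omega>' (int j - int m)) [0..<m]"
    have vk: "set v \<subseteq> {1..k}" using \<omega>' by (auto simp: v_def Sigma_k_def)
    obtain b where b: "b \<in> X" "fwl f v b = y" using fwl_onto[OF fon vk y] by auto
    have "continuous_on X (fwl f v)" using fwl_cont[OF fc vk] .
    then obtain \<delta> where \<delta>: "\<delta> > 0" "\<forall>a\<in>X. dist a b < \<delta> \<longrightarrow> dist (fwl f v a) y < \<epsilon>"
      using b \<epsilon> unfolding continuous_on_iff by metis
    obtain N where N: "\<forall>a\<in>X. \<exists>w\<in>Wd k N. dist (fwl f w a) b < \<delta>"
      using uniform[OF assms(1) assms(2) fc SA b(1) \<delta>(1)] by auto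
    define n where "n = N + m"
    define pw where "pw = map (\<lambda>j. \<omega> (int j - int n)) [0..<n]"
    have pwk: "set pw \<subseteq> {1..k}" using \<omega> by (auto simp: pw_def Sigma_k_def)
    obtain x0 where x0: "x0 \<in> X" "fwl f pw x0 = x" using fwl_onto[OF fon pwk x] by auto
    obtain u where u: "u \<in> Wd k N" "dist (fwl f u x0) b < \<delta>" using N x0 by auto
    define \<zeta> where "\<zeta> = (\<lambda>i::int. \<omega> (i - int n))"
    define \<zeta>' where "\<zeta>' = (\<lambda>i::int. if i < 0 then \<omega> (i - int n) else if i < int N then u ! nat i else \<omega>' (i - int n))"
    define \<eta> where "\<eta> = (\<lambda>i. \<zeta>' (i + int n))"
    define y' where "y' = fwl f (map (\<lambda>j. \<zeta>' (int j)) [0..<n]) x0"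
    have \<zeta>S: "\<zeta> \<in> Sigma_k k" using \<omega> by (auto simp: \<zeta>_def Sigma_k_def)
    have "(skew f ^^ n) (\<zeta>, x0) = (\<omega>, x)"
      by (simp add: skew_iter \<zeta>_def x0(2)[symmetric] pw_def)
    then have z: "(\<zeta>, x0) \<in> {z \<in> Sigma_k k \<times> X. (skew f ^^ n) z = (\<omega>, x)}"
      using \<zeta>S x0(1) by auto
    have ulen: "length u = N" and uk: "set u \<subseteq> {1..k}" using u by (auto simp: Wd_def)
    have "\<zeta>' i \<in> {1..k}" for i
    proof -
      consider "i < 0" | "0 \<le> i \<and> i < int N" | "\<not> i < 0 \<and> \<not> i < int N" by linarith
      then show ?thesis
      proof cases
        case 1 then show ?thesis using \<omega> by (simp add: \<zeta>'_def Sigma_k_def)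
      next
        case 2
        then have "u ! nat i \<in> set u" using ulen by (intro nth_mem) linarith
        then show ?thesis using 2 uk by (auto simp: \<zeta>'_def)
      next
        case 3 then show ?thesis using \<omega>' by (simp add: \<zeta>'_def Sigma_k_def)
      qed
    qed
    then have p: "(\<zeta>', x0) \<in> Wuu_loc k (\<zeta>, x0)"
      by (auto simp: Wuu_loc_def Sigma_k_def \<zeta>'_def \<zeta>_def)
    have img: "(skew f ^^ n) (\<zeta>', x0) = (\<eta>, y')" by (simp add: skew_iter \<eta>_def y'_def)
    have mem: "(\<eta>, y') \<in> Wuu k X f (\<omega>, x)"
    proof -
      have "(\<eta>, y') \<in> (skew f ^^ n) ` Wuu_loc k (\<zeta>, x0)" using p img by (metis image_eqI)
      then show ?thesis unfolding Wuu_def using z by blast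
    qed
    have s1: "map (\<lambda>j. \<zeta>' (int j)) [0..<N] = u"
      by (rule nth_equalityI) (auto simp: ulen \<zeta>'_def)
    have s2: "map (\<lambda>j. \<zeta>' (int j)) [N..<N+m] = v"
      by (rule nth_equalityI) (auto simp: v_def \<zeta>'_def n_def)
    have split: "map (\<lambda>j. \<zeta>' (int j)) [0..<n] = u @ v"
      unfolding n_def using s1 s2 by (simp add: upt_add_eq_append[of 0 N m])
    have "fwl f u x0 \<in> X" using fwl_maps[OF _ uk x0(1)] fc by auto
    then have yy: "dist y' y < \<epsilon>" using \<delta>(2) u(2) by (simp add: y'_def split fwl_append)
    have agree: "\<eta> i = \<omega>' i" if "i \<ge> - int m" for i
      using that by (simp add: \<eta>_def \<zeta>'_def n_def)
    have dS: "dSigma \<nu> \<eta> \<omega>' < \<epsilon>"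
    proof (cases "\<eta> = \<omega>'")
      case True then show ?thesis using \<epsilon> by (simp add: dSigma_def)
    next
      case False
      then obtain i where i: "\<eta> i \<noteq> \<omega>' i" by auto
      define P where "P = (\<lambda>l::nat. \<eta> (int l) \<noteq> \<omega>' (int l) \<or> \<eta> (- int l) \<noteq> \<omega>' (- int l))"
      have "i < - int m" using i agree by (meson not_less)
      then have "P (nat (- i))" using i by (simp add: P_def)
      then have PL: "P (Least P)" by (rule LeastI)
      have "m < Least P"
      proof (rule ccontr)
        assume "\<not> m < Least P"
        then show False using PL agree unfolding P_def by force
      qed
      then have "\<nu> ^ (Least P) \<le> \<nu> ^ m" using assms(3,4) by (intro power_decreasing) auto
      then show ?thesis using m False by (simp add: dSigma_def P_def)
    qed
    show "\<exists>(\<eta>, y'')\<in>Wuu k X f (\<omega>, x). dSigma \<nu> \<eta> \<omega>' < \<epsilon> \<and> dist y'' y < \<epsilon>"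
      using mem dS yy by blast
  qed
qed


end
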